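(* Assume (A1) and $\beta<0$. Let $d_1(x,y)=\|x-y\|_\alpha$ and $c=\min\{\alpha^{-1},|\beta|\}$. Then for all $\mu,\nu\in\mathcal{P}$ and all $t\ge0$, $$\mathcal{W}_{d_1}(\mu p_t,\nu p_t)\le e^{-ct}\,\mathcal{W}_{d_1}(\mu,\nu).$$
   Context: Let $(\mathbb{H},\langle\cdot,\cdot\rangle,\|\cdot\|)$ be a separable real Hilbert space and $\mathcal{G}:\mathbb{H}\to\mathbb{H}$ a trace-class, symmetric, non-negative operator. Let $(e_k)_{k\ge1}$ be an orthonormal basis of $\mathbb{H}$ with $\mathcal{G}e_k=\lambda_ke_k$, $\lambda_k\ge0$, $\sum_k\lambda_k<\infty$. A $\mathcal{G}$-Wiener process is $W_t=\sum_k\sqrt{\lambda_k}B^k_t e_k$ with independent standard real Brownian motions $(B^k)$. Let $b:\mathbb{H}\to\mathbb{H}$ be Lipschitz and consider the SDE $dX_t=-X_t\,dt+b(X_t)\,dt+\sqrt2\,dW_t$, $X_0=x\in\mathbb{H}$, which has a unique strong continuous non-explosive solution; $(p_t)_{t\ge0}$ denote its Markov transition kernels and $\mu p_t(dx)=\int p_t(y,dx)\,\mu(dy)$. Fix $n\in\mathbb{N}_+$, let $\mathbb{H}^l=\mathrm{span}\{e_1,\dots,e_n\}$, $\mathbb{H}^h$ its orthogonal complement, $x^l,x^h$ the orthogonal projections, $b^l(x)=(b(x))^l$, $b^h(x)=(b(x))^h$. Assumption (A1): there are constants $0\le H_h<1$, $L_l,L_h,H_l\ge0$ with $\|b^h(x)-b^h(y)\|\le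 H_l\|x^l-y^l\|+H_h\|x^h-y^h\|$ and $\|b^l(x)-b^l(y)\|\le L_l\|x^l-y^l\|+L_h\|x^h-y^h\|$ for all $x,y\in\mathbb{H}$. Set $\alpha=\frac{1+L_h}{1-H_h}$, $\beta=\alpha H_l+L_l-1$, $\|x\|_\alpha=\|x^l\|+\alpha\|x^h\|$. For a continuous $d:\mathbb{H}\times\mathbb{H}\to[0,\infty)$ and Borel probability measures $\mu,\nu$, $\mathcal{W}_d(\mu,\nu)=\inf_\gamma\int d(x,y)\,\gamma(dx\,dy)$, the infimum over all couplings $\gamma$ of $\mu,\nu$. $\mathcal{P}$ is the set of Borel probability measures on $\mathbb{H}$ with finite first moment. *)

theory Defs
  imports "HOL-Probability.Probability"
begin

text \<open>Orthonormal basis indexed by nat (index k here corresponds to e_{k+1} of the paper).\<close>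
definition orthonormal_basis :: "(nat \<Rightarrow> 'a::{real_inner,complete_space}) \<Rightarrow> bool" where
  "orthonormal_basis e \<longleftrightarrow>
     (\<forall>i j. inner (e i) (e j) = (if i = j then 1 else 0)) \<and> closure (span (range e)) = UNIV"

definition std_BM :: "'w measure \<Rightarrow> (real \<Rightarrow> 'w \<Rightarrow> real) \<Rightarrow> bool" where
  "std_BM M X \<longleftrightarrow>
     (\<forall>t\<ge>0. X t \<in> borel_measurable M) \<and>
     (\<forall>\<omega>\<in>space M. X 0 \<omega> = 0) \<and>
     (\<forall>\<omega>\<in>space M. continuous_on {0..} (\<lambda>t. X t \<omega>)) \<and>
     (\<forall>s t. 0 \<le> s \<and> s < t \<longrightarrow>
        distributed M lborel (\<lambda>\<omega>. X t \<omega> - X s \<omega>) (normal_density 0 (sqrt (t - s)))) \<and>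
     (\<forall>ts::real list. sorted ts \<and> ts \<noteq> [] \<and> 0 \<le> hd ts \<longrightarrow>
        prob_space.indep_vars M (\<lambda>_. borel) (\<lambda>i \<omega>. X (ts ! Suc i) \<omega> - X (ts ! i) \<omega>) {..<length ts - 1})"

definition indep_BMs :: "'w measure \<Rightarrow> (nat \<Rightarrow> real \<Rightarrow> 'w \<Rightarrow> real) \<Rightarrow> bool" where
  "indep_BMs M B \<longleftrightarrow> prob_space M \<and> (\<forall>k. std_BM M (B k)) \<and>
     prob_space.indep_vars M (\<lambda>_. Pi\<^sub>M UNIV (\<lambda>_. borel)) (\<lambda>k \<omega>. \<lambda>t. B k t \<omega>) UNIV"

definition G_wiener :: "(nat \<Rightarrow> real) \<Rightarrow> (nat \<Rightarrow> 'a::{real_inner,complete_space})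
     \<Rightarrow> (nat \<Rightarrow> real \<Rightarrow> 'w \<Rightarrow> real) \<Rightarrow> real \<Rightarrow> 'w \<Rightarrow> 'a" where
  "G_wiener lam e B t \<omega> = (\<Sum>k. (sqrt (lam k) * B k t \<omega>) *\<^sub>R e k)"

text \<open>X is a continuous (strong) solution of dX = -X dt + b(X) dt + sqrt 2 dW, X_0 = x,
  written in integral form (the noise is additive).\<close>
definition is_solution :: "'w measure \<Rightarrow> ('a::{real_inner,complete_space} \<Rightarrow> 'a)
     \<Rightarrow> (real \<Rightarrow> 'w \<Rightarrow> 'a) \<Rightarrow> 'a \<Rightarrow> (real \<Rightarrow> 'w \<Rightarrow> 'a) \<Rightarrow> bool" where
  "is_solution M b W x X \<longleftrightarrow>
     (\<forall>t\<ge>0. X t \<in> borel_measurable M) \<and>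
     (AE \<omega> in M. continuous_on {0..} (\<lambda>t. X t \<omega>) \<and>
        (\<forall>t\<ge>0. X t \<omega> = x + integral {0..t} (\<lambda>s. - X s \<omega> + b (X s \<omega>)) + sqrt 2 *\<^sub>R W t \<omega>))"

text \<open>Transition kernel p_t(x, A) = P(X^x_t \<in> A), X y = solution started at y.\<close>
definition trans_kernel :: "'w measure \<Rightarrow> ('a \<Rightarrow> real \<Rightarrow> 'w \<Rightarrow> 'a) \<Rightarrow> real \<Rightarrow> 'a \<Rightarrow> 'a set \<Rightarrow> ennreal" where
  "trans_kernel M X t y A = emeasure M {\<omega> \<in> space M. X y t \<omega> \<in> A}"

definition kernel_act :: "'w measure \<Rightarrow> ('a::topological_space \<Rightarrow> real \<Rightarrow> 'w \<Rightarrow> 'a) \<Rightarrow> real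
     \<Rightarrow> 'a measure \<Rightarrow> 'a measure" where
  "kernel_act M X t \<mu> = measure_of UNIV (sets borel) (\<lambda>A. \<integral>\<^sup>+ y. trans_kernel M X t y A \<partial>\<mu>)"

definition borel_probs :: "('a::topological_space) measure set" where
  "borel_probs = {\<mu>. prob_space \<mu> \<and> sets \<mu> = sets borel}"

definition P1 :: "('a::real_normed_vector) measure set" where
  "P1 = {\<mu>. \<mu> \<in> borel_probs \<and> (\<integral>\<^sup>+ x. ennreal (norm x) \<partial>\<mu>) < \<infinity>}"

definition couplings :: "'a::topological_space measure \<Rightarrow> 'a measure \<Rightarrow> ('a \<times> 'a) measure set" where
  "couplings \<mu> \<nu> = {\<gamma>. \<gamma> \<in> borel_probs \<and> distr \<gamma> borel fst = \<mu> \<and> distr \<gamma> borel snd = \<nu>}"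

definition wasserstein :: "('a::topological_space \<Rightarrow> 'a \<Rightarrow> real) \<Rightarrow> 'a measure \<Rightarrow> 'a measure \<Rightarrow> ennreal" where
  "wasserstein d \<mu> \<nu> = (INF \<gamma> \<in> couplings \<mu> \<nu>. \<integral>\<^sup>+ z. ennreal (d (fst z) (snd z)) \<partial>\<gamma>)"

text \<open>Projection onto span{e_1,...,e_n} (indices 0..n-1 here).\<close>
definition low_proj :: "(nat \<Rightarrow> 'a::real_inner) \<Rightarrow> nat \<Rightarrow> 'a \<Rightarrow> 'a" where
  "low_proj e n x = (\<Sum>k<n. inner x (e k) *\<^sub>R e k)"

definition high_proj :: "(nat \<Rightarrow> 'a::real_inner) \<Rightarrow> nat \<Rightarrow> 'a \<Rightarrow> 'a" where
  "high_proj e n x = x - low_proj e n x"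

definition alpha_norm :: "(nat \<Rightarrow> 'a::real_inner) \<Rightarrow> nat \<Rightarrow> real \<Rightarrow> 'a \<Rightarrow> real" where
  "alpha_norm e n \<alpha> x = norm (low_proj e n x) + \<alpha> * norm (high_proj e n x)"

end

theory Submission
  imports Defs
begin


lemma voc:
  fixes D g :: "real \<Rightarrow> 'a::banach"
  assumes T: "T \<ge> 0" and cD: "continuous_on {0..T} D" and cg: "continuous_on {0..T} g"
    and eq: "\<And>s. s \<in> {0..T} \<Longrightarrow> D s = D 0 + integral {0..s} (\<lambda>r. - D r + g r)"
  shows "exp T *\<^sub>R D T = D 0 + integral {0..T} (\<lambda>r. exp r *\<^sub>R g r)"
proof -
  have cf: "continuous_on {0..T} (\<lambda>r. - D r + g r)"
    by (intro continuous_intros cD cg)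
  have dD: "(D has_vector_derivative (- D s + g s)) (at s within {0..T})" if s: "s \<in> {0..T}" for s
  proof -
    have "((\<lambda>u. D 0 + integral {0..u} (\<lambda>r. - D r + g r)) has_vector_derivative (- D s + g s)) (at s within {0..T})"
      using has_vector_derivative_add[OF has_vector_derivative_const integral_has_vector_derivative[OF cf s]] by (simp only: add_0_left)
    then show ?thesis
      by (rule has_vector_derivative_transform[OF s, rotated]) (rule eq)
  qed
  have dE: "((\<lambda>r. exp r *\<^sub>R D r) has_vector_derivative (exp s *\<^sub>R g s)) (at s within {0..T})"
    if s: "s \<in> {0..T}" for s
  proof -
    have e: "(exp has_real_derivative exp s) (at s within {0..T})"
      by (intro derivative_eq_intros) auto
    have "((\<lambda>r. exp r *\<^sub>R D r) has_vector_derivative (exp s *\<^sub>R (- D s + g s) + exp s *\<^sub>R D s)) (at s within {0..T})"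
      by (rule has_vector_derivative_scaleR[OF e dD[OF s]])
    moreover have "exp s *\<^sub>R (- D s + g s) + exp s *\<^sub>R D s = exp s *\<^sub>R g s"
      by (simp add: algebra_simps)
    ultimately show ?thesis by simp
  qed
  have "((\<lambda>r. exp r *\<^sub>R g r) has_integral (exp T *\<^sub>R D T - exp 0 *\<^sub>R D 0)) {0..T}"
    by (rule fundamental_theorem_of_calculus[OF T dE])
  then have "integral {0..T} (\<lambda>r. exp r *\<^sub>R g r) = exp T *\<^sub>R D T - D 0"
    by (simp add: integral_unique)
  then show ?thesis by simp
qed

lemma gronwall:
  fixes W :: "real \<Rightarrow> real"
  assumes T: "T \<ge> 0" and k: "k \<ge> 0" and cW: "continuous_on {0..T} W"
    and le: "\<And>s. s \<in> {0..T} \<Longrightarrow> W s \<le> a + k * integral {0..s} W"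
  shows "W T \<le> a * exp (k * T)"
proof -
  define \<Phi> where "\<Phi> s = integral {0..s} W" for s
  define h where "h s = exp (- k * s) * (a + k * \<Phi> s)" for s
  have cPhi: "continuous_on {0..T} \<Phi>"
    unfolding \<Phi>_def by (intro indefinite_integral_continuous_1 integrable_continuous_interval cW)
  have ch: "continuous_on {0..T} h"
    unfolding h_def by (intro continuous_intros cPhi)
  have "h T \<le> h 0"
  proof (rule DERIV_nonpos_imp_decreasing_open[OF T _ ch])
    fix s assume s: "0 < s" "s < T"
    have "(\<Phi> has_vector_derivative W s) (at s within {0..T})"
      proof -
      have "s \<in> {0..T}" using s by simp
      from integral_has_vector_derivative[OF cW this] show ?thesis unfolding \<Phi>_def .
    qed
    then have "(\<Phi> has_vector_derivative W s) (at s within {0<..<T})"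
      by (rule has_vector_derivative_within_subset) (rule greaterThanLessThan_subseteq_atLeastAtMost_iff[THEN iffD2], simp)
    then have dPhi: "(\<Phi> has_real_derivative W s) (at s)"
      proof -
      have "s \<in> {0<..<T}" using s by simp
      with \<open>(\<Phi> has_vector_derivative W s) (at s within {0<..<T})\<close>
      have "(\<Phi> has_vector_derivative W s) (at s)"
        using has_vector_derivative_within_open[of s "{0<..<T}" \<Phi> "W s"] by simp
      then show ?thesis by (simp add: has_real_derivative_iff_has_vector_derivative)
    qed
    have "(h has_real_derivative (- k * exp (- k * s) * (a + k * \<Phi> s) + exp (- k * s) * (k * W s))) (at s)"
      unfolding h_def by (auto intro!: derivative_eq_intros dPhi)
    moreover have "- k * exp (- k * s) * (a + k * \<Phi> s) + exp (- k * s) * (k * W s)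
        = k * exp (- k * s) * (W s - (a + k * \<Phi> s))" by (simp add: algebra_simps)
    moreover have "W s - (a + k * \<Phi> s) \<le> 0" using le[of s] s unfolding \<Phi>_def by auto
    ultimately show "\<exists>y. DERIV h s :> y \<and> y \<le> 0"
      using k by (intro exI[of _ "k * exp (- k * s) * (W s - (a + k * \<Phi> s))"] conjI)
        (simp_all add: mult_nonneg_nonpos)
  qed
  moreover have "h 0 = a" by (simp add: h_def \<Phi>_def)
  ultimately have "h T \<le> a" by simp
  then have "exp (- k * T) * (a + k * \<Phi> T) \<le> a" by (simp only: h_def)
  then have "a + k * \<Phi> T \<le> a * exp (k * T)"
  proof -
    have "a + k * \<Phi> T = exp (k * T) * (exp (- k * T) * (a + k * \<Phi> T))"
    proof -
      have "exp (k * T) * exp (- k * T) = 1" by (simp add: exp_minus)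
      then show ?thesis by (metis mult.assoc mult_1)
    qed
    also have "\<dots> \<le> exp (k * T) * a"
      by (rule mult_left_mono[OF \<open>exp (- k * T) * (a + k * \<Phi> T) \<le> a\<close>]) simp
    finally show ?thesis by (simp add: mult.commute)
  qed
  then show ?thesis using le[of T] T unfolding \<Phi>_def by auto
qed

lemma contract:
  fixes P Q b :: "'a::banach \<Rightarrow> 'a" and Y1 Y2 w :: "real \<Rightarrow> 'a"
  assumes P: "bounded_linear P" and Q: "bounded_linear Q"
    and cb: "continuous_on UNIV b"
    and Bh: "\<And>x y. norm (Q (b x) - Q (b y)) \<le> Hl * norm (P x - P y) + Hh * norm (Q x - Q y)"
    and Bl: "\<And>x y. norm (P (b x) - P (b y)) \<le> Ll * norm (P x - P y) + Lh * norm (Q x - Q y)"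
    and coef1: "Ll + \<alpha> * Hl \<le> \<kappa>" and coef2: "Lh + \<alpha> * Hh \<le> \<alpha> * \<kappa>"
    and pos: "0 \<le> \<kappa>" "0 \<le> \<alpha>"
    and T: "T \<ge> 0" and c1: "continuous_on {0..T} Y1" and c2: "continuous_on {0..T} Y2"
    and e1: "\<And>s. s \<in> {0..T} \<Longrightarrow> Y1 s = x1 + integral {0..s} (\<lambda>r. - Y1 r + b (Y1 r)) + w s"
    and e2: "\<And>s. s \<in> {0..T} \<Longrightarrow> Y2 s = x2 + integral {0..s} (\<lambda>r. - Y2 r + b (Y2 r)) + w s"
  shows "norm (P (Y1 T - Y2 T)) + \<alpha> * norm (Q (Y1 T - Y2 T))
     \<le> exp (- (1 - \<kappa>) * T) * (norm (P (x1 - x2)) + \<alpha> * norm (Q (x1 - x2)))"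
proof -
  interpret P: bounded_linear P by fact
  interpret Q: bounded_linear Q by fact
  define D where "D s = Y1 s - Y2 s" for s
  define g where "g s = b (Y1 s) - b (Y2 s)" for s
  define u where "u s = norm (P (D s))" for s
  define v where "v s = norm (Q (D s))" for s
  define W where "W s = exp s * (u s + \<alpha> * v s)" for s
  have cD: "continuous_on {0..T} D" unfolding D_def by (intro continuous_intros c1 c2)
  have cb1: "continuous_on {0..T} (\<lambda>s. b (Y1 s))"
    by (rule continuous_on_compose2[OF cb c1]) auto
  have cb2: "continuous_on {0..T} (\<lambda>s. b (Y2 s))"
    by (rule continuous_on_compose2[OF cb c2]) auto
  have cg: "continuous_on {0..T} g" unfolding g_def by (intro continuous_intros cb1 cb2)
  have cu: "continuous_on {0..T} u" unfolding u_def
    by (intro continuous_intros continuous_on_compose2[OF P.continuous_on[OF continuous_on_id] cD]) auto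
  have cv: "continuous_on {0..T} v" unfolding v_def
    by (intro continuous_intros continuous_on_compose2[OF Q.continuous_on[OF continuous_on_id] cD]) auto
  have cW: "continuous_on {0..T} W" unfolding W_def by (intro continuous_intros cu cv)
  have D0: "D 0 = x1 - x2"
    using e1[of 0] e2[of 0] T by (simp add: D_def)
  have eqD: "D s = D 0 + integral {0..s} (\<lambda>r. - D r + g r)" if s: "s \<in> {0..T}" for s
  proof -
    have sub: "{0..s} \<subseteq> {0..T}" using s by auto
    have i1: "(\<lambda>r. - Y1 r + b (Y1 r)) integrable_on {0..s}"
      by (intro integrable_continuous_interval continuous_intros continuous_on_subset[OF c1 sub]
          continuous_on_subset[OF cb1 sub])
    have i2: "(\<lambda>r. - Y2 r + b (Y2 r)) integrable_on {0..s}"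
      by (intro integrable_continuous_interval continuous_intros continuous_on_subset[OF c2 sub]
          continuous_on_subset[OF cb2 sub])
    have "integral {0..s} (\<lambda>r. - D r + g r)
        = integral {0..s} (\<lambda>r. (- Y1 r + b (Y1 r)) - (- Y2 r + b (Y2 r)))"
      by (rule integral_cong) (simp add: D_def g_def algebra_simps)
    also have "\<dots> = integral {0..s} (\<lambda>r. - Y1 r + b (Y1 r)) - integral {0..s} (\<lambda>r. - Y2 r + b (Y2 r))"
      by (rule integral_diff[OF i1 i2])
    finally show ?thesis using e1[OF s] e2[OF s] D0 by (simp add: D_def)
  qed
  have key: "W s \<le> W 0 + \<kappa> * integral {0..s} W" if s: "s \<in> {0..T}" for s
  proof -
    have sub: "{0..s} \<subseteq> {0..T}" using s by auto
    have s0: "s \<ge> 0" using s by auto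
    have vs: "exp s *\<^sub>R D s = D 0 + integral {0..s} (\<lambda>r. exp r *\<^sub>R g r)"
      by (rule voc[OF s0 continuous_on_subset[OF cD sub] continuous_on_subset[OF cg sub]])
        (rule eqD, insert sub, auto)
    have ieg: "(\<lambda>r. exp r *\<^sub>R g r) integrable_on {0..s}"
      by (intro integrable_continuous_interval continuous_intros continuous_on_subset[OF cg sub])
    have "exp s *\<^sub>R P (D s) = P (D 0) + integral {0..s} (\<lambda>r. exp r *\<^sub>R P (g r))"
    proof -
      have "exp s *\<^sub>R P (D s) = P (exp s *\<^sub>R D s)" by (simp add: P.scaleR)
      also have "\<dots> = P (D 0) + P (integral {0..s} (\<lambda>r. exp r *\<^sub>R g r))" by (simp add: vs P.add)
      also have "P (integral {0..s} (\<lambda>r. exp r *\<^sub>R g r)) = integral {0..s} (P \<circ> (\<lambda>r. exp r *\<^sub>R g r))"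
        by (rule integral_linear[OF ieg P, symmetric])
      also have "\<dots> = integral {0..s} (\<lambda>r. exp r *\<^sub>R P (g r))"
        by (simp add: o_def P.scaleR)
      finally show ?thesis .
    qed
    then have uP: "exp s * u s \<le> u 0 + integral {0..s} (\<lambda>r. exp r * norm (P (g r)))"
    proof -
      assume h: "exp s *\<^sub>R P (D s) = P (D 0) + integral {0..s} (\<lambda>r. exp r *\<^sub>R P (g r))"
      have "exp s * u s = norm (exp s *\<^sub>R P (D s))" by (simp add: u_def)
      also have "\<dots> \<le> norm (P (D 0)) + norm (integral {0..s} (\<lambda>r. exp r *\<^sub>R P (g r)))"
        unfolding h by (rule norm_triangle_ineq)
      also have "norm (integral {0..s} (\<lambda>r. exp r *\<^sub>R P (g r))) \<le> integral {0..s} (\<lambda>r. exp r * norm (P (g r)))"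
        by (rule integral_norm_bound_integral)
          (intro integrable_continuous_interval continuous_intros
            continuous_on_compose2[OF P.continuous_on[OF continuous_on_id] continuous_on_subset[OF cg sub]], auto)+
      finally show ?thesis by (simp add: u_def)
    qed
    have "exp s *\<^sub>R Q (D s) = Q (D 0) + integral {0..s} (\<lambda>r. exp r *\<^sub>R Q (g r))"
    proof -
      have "exp s *\<^sub>R Q (D s) = Q (exp s *\<^sub>R D s)" by (simp add: Q.scaleR)
      also have "\<dots> = Q (D 0) + Q (integral {0..s} (\<lambda>r. exp r *\<^sub>R g r))" by (simp add: vs Q.add)
      also have "Q (integral {0..s} (\<lambda>r. exp r *\<^sub>R g r)) = integral {0..s} (Q \<circ> (\<lambda>r. exp r *\<^sub>R g r))"
        by (rule integral_linear[OF ieg Q, symmetric])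
      also have "\<dots> = integral {0..s} (\<lambda>r. exp r *\<^sub>R Q (g r))"
        by (simp add: o_def Q.scaleR)
      finally show ?thesis .
    qed
    then have vQ: "exp s * v s \<le> v 0 + integral {0..s} (\<lambda>r. exp r * norm (Q (g r)))"
    proof -
      assume h: "exp s *\<^sub>R Q (D s) = Q (D 0) + integral {0..s} (\<lambda>r. exp r *\<^sub>R Q (g r))"
      have "exp s * v s = norm (exp s *\<^sub>R Q (D s))" by (simp add: v_def)
      also have "\<dots> \<le> norm (Q (D 0)) + norm (integral {0..s} (\<lambda>r. exp r *\<^sub>R Q (g r)))"
        unfolding h by (rule norm_triangle_ineq)
      also have "norm (integral {0..s} (\<lambda>r. exp r *\<^sub>R Q (g r))) \<le> integral {0..s} (\<lambda>r. exp r * norm (Q (g r)))"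
        by (rule integral_norm_bound_integral)
          (intro integrable_continuous_interval continuous_intros
            continuous_on_compose2[OF Q.continuous_on[OF continuous_on_id] continuous_on_subset[OF cg sub]], auto)+
      finally show ?thesis by (simp add: v_def)
    qed
    have iP: "(\<lambda>r. exp r * norm (P (g r))) integrable_on {0..s}"
      by (intro integrable_continuous_interval continuous_intros
            continuous_on_compose2[OF P.continuous_on[OF continuous_on_id] continuous_on_subset[OF cg sub]]) auto
    have iQ: "(\<lambda>r. exp r * norm (Q (g r))) integrable_on {0..s}"
      by (intro integrable_continuous_interval continuous_intros
            continuous_on_compose2[OF Q.continuous_on[OF continuous_on_id] continuous_on_subset[OF cg sub]]) auto
    have iQ': "(\<lambda>r. \<alpha> * (exp r * norm (Q (g r)))) integrable_on {0..s}"
      using integrable_on_cmult_left[OF iQ, of \<alpha>] by simp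
    have iW: "W integrable_on {0..s}"
      by (intro integrable_continuous_interval continuous_on_subset[OF cW sub])
    have iW': "(\<lambda>r. \<kappa> * W r) integrable_on {0..s}"
      using integrable_on_cmult_left[OF iW, of \<kappa>] by simp
    have pw: "exp r * norm (P (g r)) + \<alpha> * (exp r * norm (Q (g r))) \<le> \<kappa> * W r" for r
    proof -
      have gl: "norm (P (g r)) \<le> Ll * u r + Lh * v r"
        using Bl[of "Y1 r" "Y2 r"] by (simp add: g_def u_def v_def D_def P.diff Q.diff)
      have gh: "norm (Q (g r)) \<le> Hl * u r + Hh * v r"
        using Bh[of "Y1 r" "Y2 r"] by (simp add: g_def u_def v_def D_def P.diff Q.diff)
      have u0: "u r \<ge> 0" and v0: "v r \<ge> 0" by (auto simp: u_def v_def)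
      have "norm (P (g r)) + \<alpha> * norm (Q (g r)) \<le> (Ll * u r + Lh * v r) + \<alpha> * (Hl * u r + Hh * v r)"
        using gl gh pos by (intro add_mono mult_left_mono) auto
      also have "\<dots> = (Ll + \<alpha> * Hl) * u r + (Lh + \<alpha> * Hh) * v r" by (simp add: algebra_simps)
      also have "\<dots> \<le> \<kappa> * u r + (\<alpha> * \<kappa>) * v r"
        using coef1 coef2 u0 v0 by (intro add_mono mult_right_mono) auto
      finally have "norm (P (g r)) + \<alpha> * norm (Q (g r)) \<le> \<kappa> * (u r + \<alpha> * v r)"
        by (simp add: algebra_simps)
      then have "exp r * (norm (P (g r)) + \<alpha> * norm (Q (g r))) \<le> exp r * (\<kappa> * (u r + \<alpha> * v r))"
        by (intro mult_left_mono) auto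
      then show ?thesis by (simp add: W_def algebra_simps)
    qed
    have "W s = exp s * u s + \<alpha> * (exp s * v s)" by (simp add: W_def algebra_simps)
    also have "\<dots> \<le> (u 0 + integral {0..s} (\<lambda>r. exp r * norm (P (g r))))
        + \<alpha> * (v 0 + integral {0..s} (\<lambda>r. exp r * norm (Q (g r))))"
      using uP vQ pos by (intro add_mono mult_left_mono) auto
    also have "\<dots> = W 0 + (integral {0..s} (\<lambda>r. exp r * norm (P (g r))) + \<alpha> * integral {0..s} (\<lambda>r. exp r * norm (Q (g r))))"
      by (simp add: W_def algebra_simps)
    also have "\<dots> = W 0 + integral {0..s} (\<lambda>r. exp r * norm (P (g r)) + \<alpha> * (exp r * norm (Q (g r))))"
      by (subst integral_add[OF iP iQ']) simp
    also have "\<dots> \<le> W 0 + integral {0..s} (\<lambda>r. \<kappa> * W r)"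
      by (intro add_left_mono integral_le integrable_add iP iQ' iW' pw)
    also have "\<dots> = W 0 + \<kappa> * integral {0..s} W" by simp
    finally show ?thesis .
  qed
  have "W T \<le> W 0 * exp (\<kappa> * T)"
    by (rule gronwall[OF T pos(1) cW key])
  then have "exp T * (u T + \<alpha> * v T) \<le> (u 0 + \<alpha> * v 0) * exp (\<kappa> * T)"
    by (simp add: W_def)
  then have "exp (- T) * (exp T * (u T + \<alpha> * v T)) \<le> exp (- T) * ((u 0 + \<alpha> * v 0) * exp (\<kappa> * T))"
    by (intro mult_left_mono) auto
  moreover have "exp (- T) * (exp T * (u T + \<alpha> * v T)) = u T + \<alpha> * v T"
    by (simp add: mult.assoc[symmetric] exp_minus)
  moreover have "exp (- T) * ((u 0 + \<alpha> * v 0) * exp (\<kappa> * T)) = exp (- (1 - \<kappa>) * T) * (u 0 + \<alpha> * v 0)"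
    by (simp add: exp_add[symmetric] algebra_simps)
  ultimately have fin: "u T + \<alpha> * v T \<le> exp (- (1 - \<kappa>) * T) * (u 0 + \<alpha> * v 0)"
    by metis
  have "u 0 = norm (P (x1 - x2))" "v 0 = norm (Q (x1 - x2))" by (simp_all add: u_def v_def D0)
  with fin show ?thesis by (simp add: u_def v_def D_def)
qed



typedef ('a::"{real_normed_vector,complete_space}") bw = "UNIV :: 'a set"
  morphisms Rep Abs by auto

setup_lifting type_definition_bw

instantiation bw :: ("{real_normed_vector,complete_space}") real_normed_vector
begin
lift_definition zero_bw :: "'a bw" is 0 .
lift_definition plus_bw :: "'a bw \<Rightarrow> 'a bw \<Rightarrow> 'a bw" is "(+)" .
lift_definition minus_bw :: "'a bw \<Rightarrow> 'a bw \<Rightarrow> 'a bw" is "(-)" .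
lift_definition uminus_bw :: "'a bw \<Rightarrow> 'a bw" is uminus .
lift_definition scaleR_bw :: "real \<Rightarrow> 'a bw \<Rightarrow> 'a bw" is scaleR .
lift_definition norm_bw :: "'a bw \<Rightarrow> real" is norm .
lift_definition sgn_bw :: "'a bw \<Rightarrow> 'a bw" is sgn .
lift_definition dist_bw :: "'a bw \<Rightarrow> 'a bw \<Rightarrow> real" is dist .
definition uniformity_bw :: "('a bw \<times> 'a bw) filter" where
  "uniformity_bw = (INF e\<in>{0<..}. principal {(x, y). dist x y < e})"
definition open_bw :: "'a bw set \<Rightarrow> bool" where
  "open_bw U = (\<forall>x\<in>U. eventually (\<lambda>(x', y). x' = x \<longrightarrow> y \<in> U) uniformity)"
instance
proof
  fix x y z :: "'a bw" and a b :: real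
  show "x + y + z = x + (y + z)" by transfer (simp add: add.assoc)
  show "x + y = y + x" by transfer (simp add: add.commute)
  show "0 + x = x" by transfer simp
  show "- x + x = 0" by transfer simp
  show "x - y = x + - y" by transfer simp
  show "a *\<^sub>R (x + y) = a *\<^sub>R x + a *\<^sub>R y" by transfer (simp add: scaleR_add_right)
  show "(a + b) *\<^sub>R x = a *\<^sub>R x + b *\<^sub>R x" by transfer (simp add: scaleR_add_left)
  show "a *\<^sub>R b *\<^sub>R x = (a * b) *\<^sub>R x" by transfer simp
  show "1 *\<^sub>R x = x" by transfer simp
  show "dist x y = norm (x - y)" by transfer (simp add: dist_norm)
  show "sgn x = inverse (norm x) *\<^sub>R x" by transfer (simp add: sgn_div_norm)
  show "(norm x = 0) = (x = 0)" by transfer simp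
  show "norm (x + y) \<le> norm x + norm y" by transfer (rule norm_triangle_ineq)
  show "norm (a *\<^sub>R x) = \<bar>a\<bar> * norm x" by transfer simp
qed (simp_all add: uniformity_bw_def open_bw_def)
end

lemma norm_Rep: "norm (Rep x) = norm x" by transfer simp
lemma Rep_add: "Rep (x + y) = Rep x + Rep y" by transfer simp
lemma Rep_diff: "Rep (x - y) = Rep x - Rep y" by transfer simp
lemma Rep_scaleR: "Rep (a *\<^sub>R x) = a *\<^sub>R Rep x" by transfer simp
lemma Abs_add: "Abs (x + y) = Abs x + Abs y" by (metis Abs_inverse Rep_add Rep_inverse UNIV_I)
lemma Abs_diff: "Abs (x - y) = Abs x - Abs y" by (metis Abs_inverse Rep_diff Rep_inverse UNIV_I)
lemma Abs_scaleR: "Abs (a *\<^sub>R x) = a *\<^sub>R Abs x" by (metis Abs_inverse Rep_scaleR Rep_inverse UNIV_I)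
lemma norm_Abs: "norm (Abs x) = norm x" by (metis Abs_inverse UNIV_I norm_Rep)
lemma Abs_Rep[simp]: "Abs (Rep x) = x" by (rule Rep_inverse)
lemma Rep_Abs[simp]: "Rep (Abs x) = x" by (simp add: Abs_inverse)

lemma bl_Rep: "bounded_linear Rep"
  by (rule bounded_linear_intro[where K=1]) (simp_all add: Rep_add Rep_scaleR norm_Rep)
lemma bl_Abs: "bounded_linear Abs"
  by (rule bounded_linear_intro[where K=1]) (simp_all add: Abs_add Abs_scaleR norm_Abs)

instance bw :: ("{real_normed_vector,complete_space}") complete_space
proof
  fix X :: "nat \<Rightarrow> 'a bw" assume "Cauchy X"
  then have "Cauchy (\<lambda>n. Rep (X n))"
    by (simp add: Cauchy_def dist_norm Rep_diff[symmetric] norm_Rep)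
  then obtain L where L: "(\<lambda>n. Rep (X n)) \<longlonglongrightarrow> L" by (auto simp: Cauchy_convergent_iff convergent_def)
  have "(\<lambda>n. Abs (Rep (X n))) \<longlonglongrightarrow> Abs L"
    by (rule bounded_linear.tendsto[OF bl_Abs L])
  then show "convergent X" by (auto simp: convergent_def)
qed

instance bw :: ("{real_normed_vector,complete_space}") banach ..

lemma Abs_uminus: "Abs (- x) = - Abs x" by (metis Abs_diff diff_0 Abs_inverse Rep_inverse UNIV_I zero_bw.rep_eq)

lemma integral_Abs:
  fixes f :: "real \<Rightarrow> 'a::{real_normed_vector,complete_space}"
  assumes cf: "continuous_on {a..b} f"
  shows "integral {a..b} (\<lambda>r. Abs (f r)) = Abs (integral {a..b} f)"
proof -
  have cg: "continuous_on {a..b} (\<lambda>r. Abs (f r))"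
    by (rule continuous_on_compose2[OF bounded_linear.continuous_on[OF bl_Abs continuous_on_id] cf]) auto
  have "((\<lambda>r. Abs (f r)) has_integral integral {a..b} (\<lambda>r. Abs (f r))) {a..b}"
    using integrable_continuous_interval[OF cg] by (simp add: has_integral_integral)
  from has_integral_linear[OF this bl_Rep] have "(f has_integral Rep (integral {a..b} (\<lambda>r. Abs (f r)))) {a..b}"
    by (simp add: o_def)
  then have "integral {a..b} f = Rep (integral {a..b} (\<lambda>r. Abs (f r)))" by (rule integral_unique)
  then show ?thesis by simp
qed

lemma contract':
  fixes P Q b :: "'a::{real_normed_vector,complete_space} \<Rightarrow> 'a" and Ya Yb w :: "real \<Rightarrow> 'a"
  assumes P: "bounded_linear P" and Q: "bounded_linear Q"
    and cb: "continuous_on UNIV b"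
    and Bh: "\<And>x y. norm (Q (b x) - Q (b y)) \<le> Hl * norm (P x - P y) + Hh * norm (Q x - Q y)"
    and Bl: "\<And>x y. norm (P (b x) - P (b y)) \<le> Ll * norm (P x - P y) + Lh * norm (Q x - Q y)"
    and coef1: "Ll + \<alpha> * Hl \<le> \<kappa>" and coef2: "Lh + \<alpha> * Hh \<le> \<alpha> * \<kappa>"
    and pos: "0 \<le> \<kappa>" "0 \<le> \<alpha>"
    and T: "T \<ge> 0" and c1: "continuous_on {0..T} Ya" and c2: "continuous_on {0..T} Yb"
    and e1: "\<And>s. s \<in> {0..T} \<Longrightarrow> Ya s = x1 + integral {0..s} (\<lambda>r. - Ya r + b (Ya r)) + w s"
    and e2: "\<And>s. s \<in> {0..T} \<Longrightarrow> Yb s = x2 + integral {0..s} (\<lambda>r. - Yb r + b (Yb r)) + w s"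
  shows "norm (P (Ya T - Yb T)) + \<alpha> * norm (Q (Ya T - Yb T))
     \<le> exp (- (1 - \<kappa>) * T) * (norm (P (x1 - x2)) + \<alpha> * norm (Q (x1 - x2)))"
proof -
  define P' where "P' z = Abs (P (Rep z))" for z :: "'a bw"
  define Q' where "Q' z = Abs (Q (Rep z))" for z :: "'a bw"
  define b' where "b' z = Abs (b (Rep z))" for z :: "'a bw"
  have cA: "continuous_on S Abs" for S :: "'a set"
    by (rule bounded_linear.continuous_on[OF bl_Abs continuous_on_id])
  have cR: "continuous_on S Rep" for S :: "'a bw set"
    by (rule bounded_linear.continuous_on[OF bl_Rep continuous_on_id])
  have bP': "bounded_linear P'" unfolding P'_def
    by (intro bounded_linear_compose[OF bl_Abs] bounded_linear_compose[OF P] bl_Rep)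
  have bQ': "bounded_linear Q'" unfolding Q'_def
    by (intro bounded_linear_compose[OF bl_Abs] bounded_linear_compose[OF Q] bl_Rep)
  have cb': "continuous_on UNIV b'" unfolding b'_def
    by (rule continuous_on_compose2[OF cA continuous_on_compose2[OF cb cR]]) auto
  have nd: "norm (Abs u - Abs v) = norm (u - v)" for u v :: 'a
    by (simp add: Abs_diff[symmetric] norm_Abs)
  have cY: "continuous_on {0..T} (\<lambda>s. Abs (Y s))" if "continuous_on {0..T} Y" for Y :: "real \<Rightarrow> 'a"
    by (rule continuous_on_compose2[OF cA that]) auto
  have eq': "Abs (Y s) = Abs x + integral {0..s} (\<lambda>r. - Abs (Y r) + b' (Abs (Y r))) + Abs (w s)"
    if cY0: "continuous_on {0..T} Y" and eY: "\<And>s. s \<in> {0..T} \<Longrightarrow> Y s = x + integral {0..s} (\<lambda>r. - Y r + b (Y r)) + w s"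
      and s: "s \<in> {0..T}" for Y :: "real \<Rightarrow> 'a" and x s
  proof -
    have sub: "{0..s} \<subseteq> {0..T}" using s by auto
    have cf: "continuous_on {0..s} (\<lambda>r. - Y r + b (Y r))"
      by (intro continuous_intros continuous_on_subset[OF cY0 sub]
          continuous_on_compose2[OF cb continuous_on_subset[OF cY0 sub]]) auto
    have "integral {0..s} (\<lambda>r. - Abs (Y r) + b' (Abs (Y r))) = integral {0..s} (\<lambda>r. Abs (- Y r + b (Y r)))"
      by (simp add: b'_def Abs_add Abs_uminus Abs_diff)
    also have "\<dots> = Abs (integral {0..s} (\<lambda>r. - Y r + b (Y r)))" by (rule integral_Abs[OF cf])
    finally show ?thesis using eY[OF s] by (metis Abs_add)
  qed
  have "norm (P' (Abs (Ya T) - Abs (Yb T))) + \<alpha> * norm (Q' (Abs (Ya T) - Abs (Yb T)))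
     \<le> exp (- (1 - \<kappa>) * T) * (norm (P' (Abs x1 - Abs x2)) + \<alpha> * norm (Q' (Abs x1 - Abs x2)))"
  proof (rule contract[OF bP' bQ' cb' _ _ coef1 coef2 pos T cY[OF c1] cY[OF c2]])
    show "norm (Q' (b' x) - Q' (b' y)) \<le> Hl * norm (P' x - P' y) + Hh * norm (Q' x - Q' y)" for x y
      using Bh[of "Rep x" "Rep y"] by (simp add: P'_def Q'_def b'_def nd)
    show "norm (P' (b' x) - P' (b' y)) \<le> Ll * norm (P' x - P' y) + Lh * norm (Q' x - Q' y)" for x y
      using Bl[of "Rep x" "Rep y"] by (simp add: P'_def Q'_def b'_def nd)
    show "Abs (Ya s) = Abs x1 + integral {0..s} (\<lambda>r. - Abs (Ya r) + b' (Abs (Ya r))) + Abs (w s)"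
      if "s \<in> {0..T}" for s by (rule eq'[OF c1 e1 that])
    show "Abs (Yb s) = Abs x2 + integral {0..s} (\<lambda>r. - Abs (Yb r) + b' (Abs (Yb r))) + Abs (w s)"
      if "s \<in> {0..T}" for s by (rule eq'[OF c2 e2 that])
  qed
  then show ?thesis by (simp add: P'_def Q'_def Rep_diff norm_Abs)
qed



lemma version:
  fixes X :: "'a::{real_normed_vector,complete_space,second_countable_topology} \<Rightarrow> 'w \<Rightarrow> 'a" and dn :: "'a \<Rightarrow> real"
  assumes meas: "\<And>y. X y \<in> borel_measurable M"
    and contr: "\<And>x y. AE \<omega> in M. dn (X x \<omega> - X y \<omega>) \<le> dn (x - y)"
    and lower: "\<And>z. norm z \<le> dn z" and upper: "\<And>z. dn z \<le> K * norm z" and K: "K \<ge> 0"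
  shows "\<exists>Xt. Xt \<in> borel_measurable (borel \<Otimes>\<^sub>M M) \<and> (\<forall>y. AE \<omega> in M. Xt (y, \<omega>) = X y \<omega>)"
proof -
  obtain D :: "'a set" where "countable D" and D: "\<And>U. open U \<Longrightarrow> U \<noteq> {} \<Longrightarrow> \<exists>d\<in>D. d \<in> U"
    by (erule countable_dense_setE)
  have Dne: "D \<noteq> {}" using D[of UNIV] by auto
  define q where "q = from_nat_into D"
  define r :: "nat \<Rightarrow> real" where "r m = inverse (real (Suc m))" for m
  have r_pos: "r m > 0" for m by (simp add: r_def)
  have ex: "\<exists>i. dist y (q i) < r m" for y m
  proof -
    obtain d where "d \<in> D" "d \<in> ball y (r m)"
      using D[of "ball y (r m)"] r_pos[of m] by auto
    then show ?thesis unfolding q_def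
      using range_from_nat_into[OF Dne \<open>countable D\<close>] by (metis mem_ball rangeE)
  qed
  define idx where "idx m y = (LEAST i. dist y (q i) < r m)" for m y
  have idx: "dist y (q (idx m y)) < r m" for m y
    unfolding idx_def by (rule LeastI_ex[OF ex])
  have "AE \<omega> in M. \<forall>i j. dn (X (q i) \<omega> - X (q j) \<omega>) \<le> dn (q i - q j)"
    by (simp add: AE_all_countable contr)
  then obtain N where N: "N \<in> null_sets M"
    and good: "\<And>\<omega>. \<omega> \<in> space M - N \<Longrightarrow> \<forall>i j. dn (X (q i) \<omega> - X (q j) \<omega>) \<le> dn (q i - q j)"
    by (auto elim!: AE_E)
  define F where "F m p = (if snd p \<in> N then 0 else X (q (idx m (fst p))) (snd p))" for m p
  have bound: "norm (X (q i) \<omega> - X (q j) \<omega>) \<le> K * dist (q i) (q j)" if "\<omega> \<in> space M - N" for i j \<omega>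
  proof -
    have "dn (X (q i) \<omega> - X (q j) \<omega>) \<le> dn (q i - q j)" using good[OF that] by blast
    then show ?thesis using lower[of "X (q i) \<omega> - X (q j) \<omega>"] upper[of "q i - q j"]
      by (simp add: dist_norm)
  qed
  have cauchy: "Cauchy (\<lambda>m. F m (y, \<omega>))" if "\<omega> \<in> space M" for y \<omega>
  proof (cases "\<omega> \<in> N")
    case True then show ?thesis by (simp add: F_def convergent_Cauchy[OF convergent_const])
  next
    case False
    show ?thesis
    proof (rule CauchyI)
      fix e :: real assume e: "e > 0"
      obtain m0 where m0: "inverse (real (Suc m0)) < e / (2 * (K + 1))"
        using reals_Archimedean[of "e / (2 * (K + 1))"] e K by auto
      have "norm (F m (y, \<omega>) - F k (y, \<omega>)) < e" if "m \<ge> m0" "k \<ge> m0" for m k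
      proof -
        have rm: "r m \<le> r m0" "r k \<le> r m0" using that by (auto simp: r_def intro!: le_imp_inverse_le)
        have "dist (q (idx m y)) (q (idx k y)) \<le> dist y (q (idx m y)) + dist y (q (idx k y))"
          by (metis dist_commute dist_triangle)
        also have "\<dots> \<le> 2 * r m0" using idx[of y m] idx[of y k] rm by auto
        finally have dd: "dist (q (idx m y)) (q (idx k y)) \<le> 2 * r m0" .
        have "norm (F m (y, \<omega>) - F k (y, \<omega>)) \<le> K * dist (q (idx m y)) (q (idx k y))"
          using bound[of \<omega> "idx m y" "idx k y"] False \<open>\<omega> \<in> space M\<close> by (simp add: F_def)
        also have "\<dots> \<le> K * (2 * r m0)" by (rule mult_left_mono[OF dd K])
        also have "\<dots> \<le> (K + 1) * (2 * r m0)" using r_pos[of m0] by (intro mult_right_mono) auto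
        also have "\<dots> < (K + 1) * (2 * (e / (2 * (K + 1))))"
          using m0 K by (intro mult_strict_left_mono) (auto simp: r_def)
        also have "\<dots> = e" using K by (simp add: field_simps)
        finally show ?thesis .
      qed
      then show "\<exists>M. \<forall>m\<ge>M. \<forall>n\<ge>M. norm (F m (y, \<omega>) - F n (y, \<omega>)) < e" by blast
    qed
  qed
  define Xt where "Xt p = lim (\<lambda>m. F m p)" for p
  have conv: "(\<lambda>m. F m p) \<longlonglongrightarrow> Xt p" if hp: "p \<in> space (borel \<Otimes>\<^sub>M M)" for p
  proof -
    obtain y \<omega> where p: "p = (y, \<omega>)" "\<omega> \<in> space M" using hp by (cases p) (auto simp: space_pair_measure)
    show ?thesis unfolding p Xt_def
      using cauchy[OF p(2), of y] by (simp add: Cauchy_convergent_iff convergent_LIMSEQ_iff)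
  qed
  have mF: "F m \<in> borel_measurable (borel \<Otimes>\<^sub>M M)" for m
  proof -
    have Nm: "N \<in> sets M" using N by auto
    have mi: "(\<lambda>p. idx m (fst p)) \<in> measurable (borel \<Otimes>\<^sub>M M) (count_space UNIV)"
      unfolding idx_def by measurable
    have mX: "(\<lambda>p. X (q (idx m (fst p))) (snd p)) \<in> borel_measurable (borel \<Otimes>\<^sub>M M)"
      by (rule measurable_compose_countable'[where f="\<lambda>i p. X (q i) (snd p)", OF _ mi])
        (auto intro: measurable_compose[OF measurable_snd meas])
    show ?thesis unfolding F_def
      using Nm mX by measurable
  qed
  have mXt: "Xt \<in> borel_measurable (borel \<Otimes>\<^sub>M M)"
    by (rule borel_measurable_LIMSEQ_metric[OF mF conv])
  have ae: "AE \<omega> in M. Xt (y, \<omega>) = X y \<omega>" for y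
  proof -
    have "AE \<omega> in M. \<omega> \<notin> N" using N by (rule AE_not_in)
    moreover have "AE \<omega> in M. \<forall>i. dn (X (q i) \<omega> - X y \<omega>) \<le> dn (q i - y)"
      by (simp add: AE_all_countable contr)
    ultimately show ?thesis
    proof eventually_elim
      case (elim \<omega>)
      have "(\<lambda>m. F m (y, \<omega>)) \<longlonglongrightarrow> X y \<omega>"
      proof (rule LIM_zero_cancel, rule tendsto_norm_zero_cancel, rule Lim_null_comparison)
        show "\<forall>\<^sub>F m in sequentially. norm (norm (F m (y, \<omega>) - X y \<omega>)) \<le> K * r m"
        proof (rule always_eventually, rule allI)
          fix m
          have "norm (F m (y, \<omega>) - X y \<omega>) \<le> dn (q (idx m y) - y)"
            using elim lower[of "X (q (idx m y)) \<omega> - X y \<omega>"] by (auto simp: F_def intro: order_trans)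
          also have "\<dots> \<le> K * norm (q (idx m y) - y)" by (rule upper)
          also have "\<dots> \<le> K * r m" using idx[of y m] K
            by (intro mult_left_mono) (auto simp: dist_norm norm_minus_commute)
          finally show "norm (norm (F m (y, \<omega>) - X y \<omega>)) \<le> K * r m" by simp
        qed
        show "(\<lambda>m. K * r m) \<longlonglongrightarrow> 0"
          unfolding r_def by (intro tendsto_mult_right_zero LIMSEQ_inverse_real_of_nat)
      qed
      then show ?case unfolding Xt_def by (rule limI)
    qed
  qed
  show ?thesis using mXt ae by blast
qed



lemma marginal:
  fixes Xt :: "'a::{second_countable_topology,topological_space} \<times> 'w \<Rightarrow> 'a"
    and X :: "'a \<Rightarrow> real \<Rightarrow> 'w \<Rightarrow> 'a" and \<pi> :: "'b \<Rightarrow> 'a"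
  assumes M: "prob_space M"
    and mXt: "Xt \<in> borel_measurable (borel \<Otimes>\<^sub>M M)"
    and ae: "\<And>y. AE \<omega> in M. Xt (y, \<omega>) = X y t \<omega>"
    and mX: "\<And>y. X y t \<in> borel_measurable M"
    and mpi: "\<pi> \<in> measurable \<rho> borel"
  shows "distr (\<rho> \<Otimes>\<^sub>M M) borel (\<lambda>p. Xt (\<pi> (fst p), snd p)) = kernel_act M X t (distr \<rho> borel \<pi>)"
proof -
  interpret M: prob_space M by fact
  define G where "G p = Xt (\<pi> (fst p), snd p)" for p
  have mG: "G \<in> borel_measurable (\<rho> \<Otimes>\<^sub>M M)"
    unfolding G_def
    by (rule measurable_compose[OF measurable_Pair[OF measurable_compose[OF measurable_fst mpi] measurable_snd] mXt])
  have mXy: "(\<lambda>\<omega>. Xt (y, \<omega>)) \<in> borel_measurable M" for y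
    by (rule measurable_compose[OF measurable_Pair[OF measurable_const measurable_ident_sets] mXt]) auto
  define N where "N = distr (\<rho> \<Otimes>\<^sub>M M) borel G"
  have eq: "emeasure N A = (\<integral>\<^sup>+ y. trans_kernel M X t y A \<partial>(distr \<rho> borel \<pi>))"
    if A: "A \<in> sets borel" for A
  proof -
    define h where "h y = emeasure M {\<omega> \<in> space M. Xt (y, \<omega>) \<in> A}" for y
    have GA: "G -` A \<inter> space (\<rho> \<Otimes>\<^sub>M M) \<in> sets (\<rho> \<Otimes>\<^sub>M M)"
      by (rule measurable_sets[OF mG A])
    have "emeasure N A = emeasure (\<rho> \<Otimes>\<^sub>M M) (G -` A \<inter> space (\<rho> \<Otimes>\<^sub>M M))"
      unfolding N_def by (rule emeasure_distr[OF mG A])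
    also have "\<dots> = (\<integral>\<^sup>+ z. emeasure M (Pair z -` (G -` A \<inter> space (\<rho> \<Otimes>\<^sub>M M))) \<partial>\<rho>)"
      by (rule M.emeasure_pair_measure_alt[OF GA])
    also have "\<dots> = (\<integral>\<^sup>+ z. h (\<pi> z) \<partial>\<rho>)"
    proof (rule nn_integral_cong)
      fix z assume z: "z \<in> space \<rho>"
      have "Pair z -` (G -` A \<inter> space (\<rho> \<Otimes>\<^sub>M M)) = {\<omega> \<in> space M. Xt (\<pi> z, \<omega>) \<in> A}"
        using z by (auto simp: G_def space_pair_measure)
      then show "emeasure M (Pair z -` (G -` A \<inter> space (\<rho> \<Otimes>\<^sub>M M))) = h (\<pi> z)"
        by (simp add: h_def)
    qed
    also have "\<dots> = (\<integral>\<^sup>+ y. h y \<partial>(distr \<rho> borel \<pi>))"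
    proof -
      define Q where "Q = {p \<in> space (borel \<Otimes>\<^sub>M M). Xt p \<in> A}"
      have Q: "Q \<in> sets (borel \<Otimes>\<^sub>M M)" unfolding Q_def
        using measurable_sets[OF mXt A] by (simp add: vimage_def Int_def conj_commute)
      have "(\<lambda>y. emeasure M (Pair y -` Q)) \<in> borel_measurable borel"
        by (rule M.measurable_emeasure_Pair[OF Q])
      moreover have "Pair y -` Q = {\<omega> \<in> space M. Xt (y, \<omega>) \<in> A}" for y
        by (auto simp: Q_def space_pair_measure)
      ultimately have mh: "h \<in> borel_measurable borel" by (simp add: h_def[abs_def])
      show ?thesis
        by (rule nn_integral_distr[OF mpi, symmetric]) (use mh in simp)
    qed
    also have "\<dots> = (\<integral>\<^sup>+ y. trans_kernel M X t y A \<partial>(distr \<rho> borel \<pi>))"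
    proof (rule nn_integral_cong)
      fix y
      have p1: "Measurable.pred M (\<lambda>\<omega>. Xt (y, \<omega>) \<in> A)"
        using measurable_sets[OF mXy A] by (simp add: pred_def vimage_def Int_def conj_commute)
      have p2: "Measurable.pred M (\<lambda>\<omega>. X y t \<omega> \<in> A)"
        using measurable_sets[OF mX A] by (simp add: pred_def vimage_def Int_def conj_commute)
      have "AE \<omega> in M. (Xt (y, \<omega>) \<in> A) = (X y t \<omega> \<in> A)"
        using ae[of y] by eventually_elim simp
      then show "h y = trans_kernel M X t y A"
        unfolding h_def trans_kernel_def by (rule emeasure_Collect_eq_AE[OF _ p2 p1])
    qed
    finally show ?thesis .
  qed
  have "N = measure_of (space N) (sets N) (emeasure N)" by (simp add: measure_of_of_measure)
  also have "\<dots> = measure_of UNIV (sets borel) (emeasure N)" by (simp add: N_def)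
  also have "\<dots> = measure_of UNIV (sets borel) (\<lambda>A. \<integral>\<^sup>+ y. trans_kernel M X t y A \<partial>(distr \<rho> borel \<pi>))"
  proof (rule measure_of_eq)
    show "sets (borel :: 'a measure) \<subseteq> Pow UNIV" by auto
    fix a :: "'a set" assume "a \<in> sigma_sets UNIV (sets borel)"
    then have "a \<in> sets borel"
      by (metis sets.sigma_sets_eq space_borel)
    then show "emeasure N a = (\<integral>\<^sup>+ y. trans_kernel M X t y a \<partial>(distr \<rho> borel \<pi>))" by (rule eq)
  qed
  finally show ?thesis unfolding kernel_act_def N_def G_def .
qed



lemma coupling:
  fixes Xt :: "'a::{second_countable_topology,topological_space} \<times> 'w \<Rightarrow> 'a"
    and X :: "'a \<Rightarrow> real \<Rightarrow> 'w \<Rightarrow> 'a" and d :: "'a \<Rightarrow> 'a \<Rightarrow> real"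
  assumes M: "prob_space M"
    and mXt: "Xt \<in> borel_measurable (borel \<Otimes>\<^sub>M M)"
    and ae: "\<And>y. AE \<omega> in M. Xt (y, \<omega>) = X y t \<omega>"
    and mX: "\<And>y. X y t \<in> borel_measurable M"
    and dcont: "continuous_on UNIV (\<lambda>z. d (fst z) (snd z))"
    and dpos: "\<And>x y. d x y \<ge> 0"
    and contr: "\<And>x y. AE \<omega> in M. d (Xt (x, \<omega>)) (Xt (y, \<omega>)) \<le> r * d x y"
    and r: "r \<ge> 0"
    and \<gamma>: "\<gamma> \<in> couplings \<mu> \<nu>"
  shows "wasserstein d (kernel_act M X t \<mu>) (kernel_act M X t \<nu>)
     \<le> ennreal r * (\<integral>\<^sup>+ z. ennreal (d (fst z) (snd z)) \<partial>\<gamma>)"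
proof -
  interpret M: prob_space M by fact
  have g: "prob_space \<gamma>" "sets \<gamma> = sets borel" "distr \<gamma> borel fst = \<mu>" "distr \<gamma> borel snd = \<nu>"
    using \<gamma> by (auto simp: couplings_def borel_probs_def)
  have sg: "sets \<gamma> = sets ((borel :: 'a measure) \<Otimes>\<^sub>M (borel :: 'a measure))" using g(2) by (simp only: borel_prod)
  have mfst: "fst \<in> measurable \<gamma> (borel :: 'a measure)"
    by (subst measurable_cong_sets[OF sg refl]) (rule measurable_fst)
  have msnd: "snd \<in> measurable \<gamma> (borel :: 'a measure)"
    by (subst measurable_cong_sets[OF sg refl]) (rule measurable_snd)
  have mfst': "fst \<in> measurable (borel :: ('a \<times> 'a) measure) (borel :: 'a measure)"
    by (subst borel_prod[symmetric]) (rule measurable_fst)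
  have msnd': "snd \<in> measurable (borel :: ('a \<times> 'a) measure) (borel :: 'a measure)"
    by (subst borel_prod[symmetric]) (rule measurable_snd)
  define H1 where "H1 p = Xt (fst (fst p), snd p)" for p :: "('a \<times> 'a) \<times> 'w"
  define H2 where "H2 p = Xt (snd (fst p), snd p)" for p :: "('a \<times> 'a) \<times> 'w"
  define H where "H p = (H1 p, H2 p)" for p
  have mH1: "H1 \<in> borel_measurable (\<gamma> \<Otimes>\<^sub>M M)" unfolding H1_def
    by (rule measurable_compose[OF measurable_Pair[OF measurable_compose[OF measurable_fst mfst] measurable_snd] mXt])
  have mH2: "H2 \<in> borel_measurable (\<gamma> \<Otimes>\<^sub>M M)" unfolding H2_def
    by (rule measurable_compose[OF measurable_Pair[OF measurable_compose[OF measurable_fst msnd] measurable_snd] mXt])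
  have mH: "H \<in> measurable (\<gamma> \<Otimes>\<^sub>M M) (borel :: ('a \<times> 'a) measure)"
    unfolding H_def by (subst borel_prod[symmetric]) (rule measurable_Pair[OF mH1 mH2])
  define \<Gamma> where "\<Gamma> = distr (\<gamma> \<Otimes>\<^sub>M M) borel H"
  have pGM: "prob_space (\<gamma> \<Otimes>\<^sub>M M)" by (rule prob_space_pair[OF g(1) M])
  have "distr \<Gamma> borel fst = distr (\<gamma> \<Otimes>\<^sub>M M) borel (fst \<circ> H)"
    unfolding \<Gamma>_def by (rule distr_distr[OF mfst' mH])
  also have "\<dots> = distr (\<gamma> \<Otimes>\<^sub>M M) borel (\<lambda>p. Xt (fst (fst p), snd p))"
    by (simp add: o_def H_def H1_def)
  also have "\<dots> = kernel_act M X t \<mu>"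
    using marginal[where X=X and t=t, OF M mXt ae mX mfst] g(3) by simp
  finally have m1: "distr \<Gamma> borel fst = kernel_act M X t \<mu>" .
  have "distr \<Gamma> borel snd = distr (\<gamma> \<Otimes>\<^sub>M M) borel (snd \<circ> H)"
    unfolding \<Gamma>_def by (rule distr_distr[OF msnd' mH])
  also have "\<dots> = distr (\<gamma> \<Otimes>\<^sub>M M) borel (\<lambda>p. Xt (snd (fst p), snd p))"
    by (simp add: o_def H_def H2_def)
  also have "\<dots> = kernel_act M X t \<nu>"
    using marginal[where X=X and t=t, OF M mXt ae mX msnd] g(4) by simp
  finally have m2: "distr \<Gamma> borel snd = kernel_act M X t \<nu>" .
  have Gc: "\<Gamma> \<in> couplings (kernel_act M X t \<mu>) (kernel_act M X t \<nu>)"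
    unfolding couplings_def borel_probs_def using m1 m2
    by (auto simp: \<Gamma>_def intro!: prob_space.prob_space_distr[OF pGM mH])
  have md: "(\<lambda>z. ennreal (d (fst z) (snd z))) \<in> borel_measurable (borel :: ('a \<times> 'a) measure)"
    by (intro measurable_compose[OF borel_measurable_continuous_onI[OF dcont]] measurable_ennreal)
  have mdH: "(\<lambda>p. ennreal (d (H1 p) (H2 p))) \<in> borel_measurable (\<gamma> \<Otimes>\<^sub>M M)"
    using measurable_compose[OF mH md] by (simp add: H_def)
  have mdg: "(\<lambda>z. ennreal (d (fst z) (snd z))) \<in> borel_measurable \<gamma>"
    by (subst measurable_cong_sets[OF g(2) refl]) (rule md)
  have "wasserstein d (kernel_act M X t \<mu>) (kernel_act M X t \<nu>) \<le> (\<integral>\<^sup>+ z. ennreal (d (fst z) (snd z)) \<partial>\<Gamma>)"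
    unfolding wasserstein_def by (rule INF_lower[OF Gc])
  also have "\<dots> = (\<integral>\<^sup>+ p. ennreal (d (H1 p) (H2 p)) \<partial>(\<gamma> \<Otimes>\<^sub>M M))"
    unfolding \<Gamma>_def by (subst nn_integral_distr[OF mH]) (use md in \<open>simp_all add: H_def\<close>)
  also have "\<dots> = (\<integral>\<^sup>+ z. \<integral>\<^sup>+ \<omega>. ennreal (d (H1 (z, \<omega>)) (H2 (z, \<omega>))) \<partial>M \<partial>\<gamma>)"
    by (rule M.nn_integral_fst[OF mdH, symmetric])
  also have "\<dots> \<le> (\<integral>\<^sup>+ z. ennreal r * ennreal (d (fst z) (snd z)) \<partial>\<gamma>)"
  proof (rule nn_integral_mono)
    fix z :: "'a \<times> 'a"
    have "(\<integral>\<^sup>+ \<omega>. ennreal (d (H1 (z, \<omega>)) (H2 (z, \<omega>))) \<partial>M) \<le> (\<integral>\<^sup>+ \<omega>. ennreal (r * d (fst z) (snd z)) \<partial>M)"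
      by (rule nn_integral_mono_AE)
        (use contr[of "fst z" "snd z"] in \<open>auto simp: H1_def H2_def elim!: eventually_mono intro: ennreal_leI\<close>)
    also have "\<dots> = ennreal r * ennreal (d (fst z) (snd z))"
      using r by (simp add: M.emeasure_space_1 ennreal_mult')
    finally show "(\<integral>\<^sup>+ \<omega>. ennreal (d (H1 (z, \<omega>)) (H2 (z, \<omega>))) \<partial>M) \<le> ennreal r * ennreal (d (fst z) (snd z))" .
  qed
  also have "\<dots> = ennreal r * (\<integral>\<^sup>+ z. ennreal (d (fst z) (snd z)) \<partial>\<gamma>)"
    by (rule nn_integral_cmult[OF mdg])
  finally show ?thesis .
qed



theorem mainTheorem2:
  fixes e :: "nat \<Rightarrow> 'a::{real_inner,complete_space,second_countable_topology}"
    and G :: "'a \<Rightarrow> 'a" and lam :: "nat \<Rightarrow> real"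
    and b :: "'a \<Rightarrow> 'a" and n :: nat
    and M :: "'w measure" and B :: "nat \<Rightarrow> real \<Rightarrow> 'w \<Rightarrow> real"
    and X :: "'a \<Rightarrow> real \<Rightarrow> 'w \<Rightarrow> 'a"
    and L_l L_h H_l H_h :: real
    and \<mu> \<nu> :: "'a measure" and t :: real
  assumes onb: "orthonormal_basis e"
    and G_op: "bounded_linear G" "\<forall>x y. inner (G x) y = inner x (G y)" "\<forall>k. G (e k) = lam k *\<^sub>R e k"
    and lam_nonneg: "\<forall>k. lam k \<ge> 0" and lam_sum: "summable lam"
    and b_lip: "\<exists>L. \<forall>x y. norm (b x - b y) \<le> L * norm (x - y)"
    and n_pos: "n \<ge> 1"
    and BMs: "indep_BMs M B"
    and sol: "\<forall>x. is_solution M b (G_wiener lam e B) x (X x)"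
    and const_bounds: "0 \<le> H_h" "H_h < 1" "0 \<le> L_l" "0 \<le> L_h" "0 \<le> H_l"
    and A1h: "\<forall>x y. norm (high_proj e n (b x) - high_proj e n (b y))
               \<le> H_l * norm (low_proj e n x - low_proj e n y) + H_h * norm (high_proj e n x - high_proj e n y)"
    and A1l: "\<forall>x y. norm (low_proj e n (b x) - low_proj e n (b y))
               \<le> L_l * norm (low_proj e n x - low_proj e n y) + L_h * norm (high_proj e n x - high_proj e n y)"
    and beta_neg: "((1 + L_h) / (1 - H_h)) * H_l + L_l - 1 < 0"
    and mu: "\<mu> \<in> P1" and nu: "\<nu> \<in> P1" and t: "t \<ge> 0"
  shows "let \<alpha> = (1 + L_h) / (1 - H_h);
             \<beta> = \<alpha> * H_l + L_l - 1;
             c = min (1 / \<alpha>) \<bar>\<beta>\<bar>;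
             d1 = (\<lambda>x y. alpha_norm e n \<alpha> (x - y))
         in wasserstein d1 (kernel_act M X t \<mu>) (kernel_act M X t \<nu>)
              \<le> ennreal (exp (- c * t)) * wasserstein d1 \<mu> \<nu>"
proof -
  define \<alpha> where "\<alpha> = (1 + L_h) / (1 - H_h)"
  define \<beta> where "\<beta> = \<alpha> * H_l + L_l - 1"
  define c where "c = min (1 / \<alpha>) \<bar>\<beta>\<bar>"
  define d1 where "d1 = (\<lambda>x y. alpha_norm e n \<alpha> (x - y))"
  define P where "P = low_proj e n"
  define Q where "Q = high_proj e n"
  have hpos: "1 - H_h > 0" using const_bounds by simp
  have \<alpha>1: "\<alpha> \<ge> 1" unfolding \<alpha>_def using hpos const_bounds by (simp add: field_simps)
  have \<alpha>eq: "\<alpha> * (1 - H_h) = 1 + L_h" unfolding \<alpha>_def using hpos by simp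
  have \<beta>neg: "\<beta> < 0" using beta_neg by (simp add: \<beta>_def \<alpha>_def)
  have cpos: "c > 0" unfolding c_def using \<alpha>1 \<beta>neg by simp
  have c\<alpha>: "c * \<alpha> \<le> 1"
  proof -
    have "c \<le> 1 / \<alpha>" unfolding c_def by simp
    then show ?thesis using \<alpha>1 by (simp add: field_simps)
  qed
  have c\<beta>: "c \<le> - \<beta>" unfolding c_def using \<beta>neg by simp
  have c1: "c \<le> 1" using c\<alpha> \<alpha>1 cpos by (smt (verit) mult_le_cancel_left1)
  have blP: "bounded_linear P" unfolding P_def low_proj_def
    by (intro bounded_linear_sum bounded_linear_compose[OF bounded_linear_scaleR_left bounded_linear_inner_left])
  have blQ: "bounded_linear Q" unfolding Q_def high_proj_def P_def[symmetric]
    by (intro bounded_linear_sub bounded_linear_ident blP)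
  interpret P: bounded_linear P by fact
  interpret Q: bounded_linear Q by fact
  have PQ: "P z + Q z = z" for z by (simp add: P_def Q_def high_proj_def)
  have an: "alpha_norm e n \<alpha> z = norm (P z) + \<alpha> * norm (Q z)" for z
    by (simp add: alpha_norm_def P_def Q_def)
  have an_pos: "alpha_norm e n \<alpha> z \<ge> 0" for z using \<alpha>1 by (simp add: an)
  have lower: "norm z \<le> alpha_norm e n \<alpha> z" for z
  proof -
    have "norm z \<le> norm (P z) + norm (Q z)" using norm_triangle_ineq[of "P z" "Q z"] by (simp add: PQ)
    also have "\<dots> \<le> norm (P z) + \<alpha> * norm (Q z)" using \<alpha>1 by (simp add: mult_le_cancel_right1)
    finally show ?thesis by (simp add: an)
  qed
  obtain KP where KP: "KP > 0" "\<And>x. norm (P x) \<le> norm x * KP" using P.pos_bounded by blast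
  obtain KQ where KQ: "KQ > 0" "\<And>x. norm (Q x) \<le> norm x * KQ" using Q.pos_bounded by blast
  define K where "K = KP + \<alpha> * KQ"
  have K0: "K \<ge> 0" unfolding K_def using KP KQ \<alpha>1 by simp
  have upper: "alpha_norm e n \<alpha> z \<le> K * norm z" for z
  proof -
    have "\<alpha> * norm (Q z) \<le> \<alpha> * (norm z * KQ)" using KQ(2)[of z] \<alpha>1 by (simp add: mult_left_mono)
    then show ?thesis using KP(2)[of z] by (simp add: an K_def algebra_simps)
  qed
  obtain L where L: "\<forall>x y. norm (b x - b y) \<le> L * norm (x - y)" using b_lip by blast
  have "(max L 0)-lipschitz_on UNIV b"
  proof (rule lipschitz_onI)
    fix x y :: 'a
    have "L * norm (x - y) \<le> max L 0 * norm (x - y)" by (intro mult_right_mono) auto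
    then show "dist (b x) (b y) \<le> max L 0 * dist x y" using L by (auto simp: dist_norm intro: order_trans)
  qed auto
  then have cb: "continuous_on UNIV b" by (rule lipschitz_on_continuous_on)
  have Mp: "prob_space M" using BMs by (simp add: indep_BMs_def)
  interpret Mp: prob_space M by fact
  have mX: "X y t \<in> borel_measurable M" for y
    using sol t by (auto simp: is_solution_def)
  have PW: "AE \<omega> in M. alpha_norm e n \<alpha> (X x t \<omega> - X y t \<omega>) \<le> exp (- c * t) * alpha_norm e n \<alpha> (x - y)"
    for x y
  proof -
    have sx: "AE \<omega> in M. continuous_on {0..} (\<lambda>s. X x s \<omega>) \<and>
        (\<forall>s\<ge>0. X x s \<omega> = x + integral {0..s} (\<lambda>r. - X x r \<omega> + b (X x r \<omega>)) + sqrt 2 *\<^sub>R G_wiener lam e B s \<omega>)"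
      using sol by (simp add: is_solution_def)
    have sy: "AE \<omega> in M. continuous_on {0..} (\<lambda>s. X y s \<omega>) \<and>
        (\<forall>s\<ge>0. X y s \<omega> = y + integral {0..s} (\<lambda>r. - X y r \<omega> + b (X y r \<omega>)) + sqrt 2 *\<^sub>R G_wiener lam e B s \<omega>)"
      using sol by (simp add: is_solution_def)
    from sx sy show ?thesis
    proof eventually_elim
      case (elim \<omega>)
      have "norm (P (X x t \<omega> - X y t \<omega>)) + \<alpha> * norm (Q (X x t \<omega> - X y t \<omega>))
          \<le> exp (- (1 - (1 - c)) * t) * (norm (P (x - y)) + \<alpha> * norm (Q (x - y)))"
      proof (rule contract'[OF blP blQ cb, where Hl=H_l and Hh=H_h and Ll=L_l and Lh=L_h
            and Ya="\<lambda>s. X x s \<omega>" and Yb="\<lambda>s. X y s \<omega>" and w="\<lambda>s. sqrt 2 *\<^sub>R G_wiener lam e B s \<omega>"])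
        show "norm (Q (b u) - Q (b v)) \<le> H_l * norm (P u - P v) + H_h * norm (Q u - Q v)" for u v
          using A1h by (simp add: P_def Q_def)
        show "norm (P (b u) - P (b v)) \<le> L_l * norm (P u - P v) + L_h * norm (Q u - Q v)" for u v
          using A1l by (simp add: P_def Q_def)
        show "L_l + \<alpha> * H_l \<le> 1 - c" using c\<beta> by (simp add: \<beta>_def)
        show "L_h + \<alpha> * H_h \<le> \<alpha> * (1 - c)" using \<alpha>eq c\<alpha> by (simp add: algebra_simps)
        show "0 \<le> 1 - c" using c1 by simp
        show "0 \<le> \<alpha>" using \<alpha>1 by simp
        show "0 \<le> t" by fact
        show "continuous_on {0..t} (\<lambda>s. X x s \<omega>)" using elim by (auto intro: continuous_on_subset)
        show "continuous_on {0..t} (\<lambda>s. X y s \<omega>)" using elim by (auto intro: continuous_on_subset)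
        show "\<And>s. s \<in> {0..t} \<Longrightarrow> X x s \<omega> = x + integral {0..s} (\<lambda>r. - X x r \<omega> + b (X x r \<omega>)) + sqrt 2 *\<^sub>R G_wiener lam e B s \<omega>"
          using elim by auto
        show "\<And>s. s \<in> {0..t} \<Longrightarrow> X y s \<omega> = y + integral {0..s} (\<lambda>r. - X y r \<omega> + b (X y r \<omega>)) + sqrt 2 *\<^sub>R G_wiener lam e B s \<omega>"
          using elim by auto
      qed
      then show ?case by (simp add: an)
    qed
  qed
  have ec: "exp (- c * t) \<le> 1" using cpos t by simp
  have "\<exists>Xt. Xt \<in> borel_measurable (borel \<Otimes>\<^sub>M M) \<and> (\<forall>y. AE \<omega> in M. Xt (y, \<omega>) = X y t \<omega>)"
  proof (rule version[where dn="alpha_norm e n \<alpha>", OF mX _ lower upper K0])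
    fix x y
    show "AE \<omega> in M. alpha_norm e n \<alpha> (X x t \<omega> - X y t \<omega>) \<le> alpha_norm e n \<alpha> (x - y)"
      using PW[of x y]
    proof eventually_elim
      case (elim \<omega>)
      have "exp (- c * t) * alpha_norm e n \<alpha> (x - y) \<le> 1 * alpha_norm e n \<alpha> (x - y)"
        using ec an_pos by (intro mult_right_mono) auto
      then show ?case using elim by simp
    qed
  qed
  then obtain Xt where mXt: "Xt \<in> borel_measurable (borel \<Otimes>\<^sub>M M)"
    and ae: "\<And>y. AE \<omega> in M. Xt (y, \<omega>) = X y t \<omega>" by blast
  have dcont: "continuous_on UNIV (\<lambda>z. d1 (fst z) (snd z))"
    unfolding d1_def an
    by (intro continuous_intros continuous_on_compose2[OF P.continuous_on[OF continuous_on_id]]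
        continuous_on_compose2[OF Q.continuous_on[OF continuous_on_id]]) auto
  have contrX: "AE \<omega> in M. d1 (Xt (x, \<omega>)) (Xt (y, \<omega>)) \<le> exp (- c * t) * d1 x y" for x y
    using ae[of x] ae[of y] PW[of x y] by eventually_elim (simp add: d1_def)
  have each: "wasserstein d1 (kernel_act M X t \<mu>) (kernel_act M X t \<nu>)
      \<le> ennreal (exp (- c * t)) * (\<integral>\<^sup>+ z. ennreal (d1 (fst z) (snd z)) \<partial>\<gamma>)"
    if "\<gamma> \<in> couplings \<mu> \<nu>" for \<gamma>
    by (rule coupling[where X=X and t=t, OF Mp mXt ae mX dcont _ contrX _ that]) (auto simp: d1_def an_pos)
  define E where "E = ennreal (exp (- c * t))"
  define F where "F = ennreal (exp (c * t))"
  have FE: "F * E = 1"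
    by (simp add: F_def E_def ennreal_mult[symmetric] exp_add[symmetric])
  define LHS where "LHS = wasserstein d1 (kernel_act M X t \<mu>) (kernel_act M X t \<nu>)"
  have "F * LHS \<le> wasserstein d1 \<mu> \<nu>"
    unfolding wasserstein_def
  proof (rule INF_greatest)
    fix \<gamma> assume "\<gamma> \<in> couplings \<mu> \<nu>"
    then have "F * LHS \<le> F * (E * (\<integral>\<^sup>+ z. ennreal (d1 (fst z) (snd z)) \<partial>\<gamma>))"
      using each unfolding LHS_def E_def by (intro mult_left_mono) auto
    also have "\<dots> = (\<integral>\<^sup>+ z. ennreal (d1 (fst z) (snd z)) \<partial>\<gamma>)"
      by (simp add: mult.assoc[symmetric] FE)
    finally show "F * LHS \<le> (\<integral>\<^sup>+ z. ennreal (d1 (fst z) (snd z)) \<partial>\<gamma>)" .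
  qed
  then have "E * (F * LHS) \<le> E * wasserstein d1 \<mu> \<nu>" by (rule mult_left_mono) simp
  moreover have "E * (F * LHS) = LHS" by (simp add: mult.assoc[symmetric] FE mult.commute[of E F])
  ultimately have "LHS \<le> E * wasserstein d1 \<mu> \<nu>" by simp
  then show ?thesis
    unfolding Let_def \<alpha>_def[symmetric] \<beta>_def[symmetric] c_def[symmetric] d1_def[symmetric]
    by (simp add: LHS_def E_def)
qed

end
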